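(* Let $\eta_1,\dots,\eta_n$ be admissible measures on $\mathbb R$. For each $i$ let $M_i(dx):=\cosh(x)\eta_i(dx)$ (a probability measure), let $X_i\sim M_i$ be independent and $U_i:=\tanh(X_i)$. Let $\bar U:=\tanh(\bar X)$ with $\bar X\sim\frac1n\sum_iM_i$, and let $\bar U_1,\dots,\bar U_n$ be i.i.d. copies of $\bar U$. Define $V:=\sum_{i=1}^nU_i^2$ and $\bar V:=\sum_{i=1}^n\bar U_i^2$. Then $\mathbb E\sqrt{\bar V}\le\mathbb E\sqrt V$.
   Context: A finitely supported positive measure $\eta$ on $\mathbb R$ is called admissible if $\int e^x\,\eta(dx)=\int e^{-x}\,\eta(dx)=1$. *)

theory Defs
  imports "HOL-Analysis.Analysis"
begin

text \<open>A finitely supported positive measure on the reals is represented by its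
  weight function w : real => real (w x = mass of the point x), with finite support.\<close>

definition supp_meas :: "(real \<Rightarrow> real) \<Rightarrow> real set" where
  "supp_meas w = {x. w x \<noteq> 0}"

definition fin_pos_measure :: "(real \<Rightarrow> real) \<Rightarrow> bool" where
  "fin_pos_measure w \<longleftrightarrow> finite (supp_meas w) \<and> (\<forall>x. 0 \<le> w x)"

definition admissible :: "(real \<Rightarrow> real) \<Rightarrow> bool" where
  "admissible w \<longleftrightarrow> fin_pos_measure w
     \<and> (\<Sum>x\<in>supp_meas w. exp x * w x) = 1
     \<and> (\<Sum>x\<in>supp_meas w. exp (- x) * w x) = 1"

definition Mmeas :: "(real \<Rightarrow> real) \<Rightarrow> real \<Rightarrow> real" where
  "Mmeas w x = cosh x * w x"

text \<open>E sqrt(V), V = sum_i tanh(X_i)^2 with X_i ~ M_i independent, i < n: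
  expectation over the product measure, a finite sum over the product of supports.\<close>
definition E_sqrt_V :: "nat \<Rightarrow> (nat \<Rightarrow> real \<Rightarrow> real) \<Rightarrow> real" where
  "E_sqrt_V n M = (\<Sum>f\<in>PiE {..<n} (\<lambda>i. supp_meas (M i)).
       (\<Prod>i<n. M i (f i)) * sqrt (\<Sum>i<n. (tanh (f i))\<^sup>2))"

definition Mbar :: "nat \<Rightarrow> (nat \<Rightarrow> real \<Rightarrow> real) \<Rightarrow> real \<Rightarrow> real" where
  "Mbar n eta x = (1 / real n) * (\<Sum>i<n. Mmeas (eta i) x)"

end

theory Submission
  imports Defs
begin


definition kern :: "real \<Rightarrow> real \<Rightarrow> real" where
  "kern z t = (1 - exp (-(z*t))) * t powr (-3/2)"

lemma bound_int: "(\<lambda>t::real. if t \<le> 1 then t powr (-1/2) else t powr (-3/2)) integrable_on {0<..}"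
proof -
  let ?b = "\<lambda>t::real. if t \<le> 1 then t powr (-1/2) else t powr (-3/2)"
  have "(\<lambda>t::real. t powr (-1/2)) integrable_on {0<..1}"
    by (rule integrable_on_powr_from_0') auto
  hence 1: "?b integrable_on {0<..1}"
    by (rule integrable_spike[where S="{}"]) auto
  have "(\<lambda>t::real. t powr (-3/2)) integrable_on {1..}"
    using has_integral_powr_to_inf[of "-3/2" 1] unfolding integrable_on_def by auto
  hence 2: "?b integrable_on {1..}"
    by (rule integrable_spike[where S="{}"]) auto
  show ?thesis
    by (rule integrable_Un'[OF 1 2]) (auto intro: negligible_subset[OF negligible_sing[of "1::real"]])
qed

lemma kern1_absint: "kern 1 absolutely_integrable_on {0<..}"
proof (rule measurable_bounded_by_integrable_imp_absolutely_integrable[OF _ _ bound_int])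
  show "kern 1 \<in> borel_measurable (lebesgue_on {0<..})"
    unfolding kern_def
    by (rule continuous_imp_measurable_on_sets_lebesgue) (auto intro!: continuous_intros)
  show "{0::real<..} \<in> sets lebesgue" by (rule sets_completionI_sets) simp
  fix t :: real assume t: "t \<in> {0<..}"
  have e: "1 - exp (-t) \<le> t" using exp_ge_add_one_self[of "-t"] by simp
  have e0: "0 \<le> 1 - exp (-t)" using t by simp
  have e1: "1 - exp (-t) \<le> 1" by simp
  show "norm (kern 1 t) \<le> (if t \<le> 1 then t powr (-1/2) else t powr (-3/2))"
  proof (cases "t \<le> 1")
    case True
    have "norm (kern 1 t) = (1 - exp (-t)) * t powr (-3/2)" using e0 t by (simp add: kern_def)
    also have "\<dots> \<le> t * t powr (-3/2)" using e t by (intro mult_right_mono) auto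
    also have "\<dots> = t powr (-1/2)" using t by (simp add: powr_mult_base)
    finally show ?thesis using True by simp
  next
    case False
    have "norm (kern 1 t) = (1 - exp (-t)) * t powr (-3/2)" using e0 t by (simp add: kern_def)
    also have "\<dots> \<le> 1 * t powr (-3/2)" using e1 t by (intro mult_right_mono) auto
    finally show ?thesis using False by simp
  qed
qed

definition C0 :: real where "C0 = integral {0<..} (kern 1)"

lemma kern_scale:
  assumes z: "z > 0" and x: "x > 0"
  shows "kern z x = sqrt z * (\<bar>z\<bar> * kern 1 (z * x))"
proof -
  have "(z * x) powr (-3/2) = z powr (-3/2) * x powr (-3/2)" using z x by (simp add: powr_mult)
  moreover have "sqrt z * z * z powr (-3/2) = 1"
  proof -
    have "sqrt z * z * z powr (-3/2) = z powr (1/2) * z powr 1 * z powr (-3/2)"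
      using z by (simp add: powr_half_sqrt)
    also have "\<dots> = z powr (1/2 + 1 + (-3/2))" by (simp only: powr_add)
    also have "\<dots> = 1" using z by simp
    finally show ?thesis .
  qed
  ultimately show ?thesis using z x unfolding kern_def
    by (simp add: mult_ac)
qed

lemma kern_integral:
  assumes z: "z \<ge> 0"
  shows "kern z integrable_on {0<..} \<and> integral {0<..} (kern z) = sqrt z * C0"
proof (cases "z = 0")
  case True
  have "kern z = (\<lambda>_. 0)" using True by (auto simp: kern_def fun_eq_iff)
  then show ?thesis using True by (simp add: integrable_0)
next
  case False
  hence zp: "z > 0" using z by simp
  have img: "(\<lambda>x. z * x) ` {0<..} = {0::real<..}"
  proof (intro set_eqI iffI)
    fix y :: real assume "y \<in> (\<lambda>x. z * x) ` {0<..}"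
    thus "y \<in> {0<..}" using zp by auto
  next
    fix y :: real assume "y \<in> {0<..}"
    thus "y \<in> (\<lambda>x. z * x) ` {0<..}" using zp by (intro image_eqI[of _ _ "y / z"]) auto
  qed
  have cv: "(\<lambda>x. \<bar>z\<bar> * kern 1 (z * x)) absolutely_integrable_on {0<..} \<and>
           integral {0<..} (\<lambda>x. \<bar>z\<bar> * kern 1 (z * x)) = C0"
  proof -
    have inj: "inj_on (\<lambda>x. z * x) {0::real<..}" using zp by (auto simp: inj_on_def)
    have S: "{0::real<..} \<in> sets lebesgue" by (rule sets_completionI_sets) simp
    have d: "\<And>x. x \<in> {0<..} \<Longrightarrow> ((\<lambda>x. z * x) has_field_derivative z) (at x within {0<..})"
      by (auto intro!: derivative_eq_intros)
    show ?thesis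
      using has_absolute_integral_change_of_variables_1'[OF S d inj, of "kern 1" C0]
        kern1_absint img by (simp add: C0_def)
  qed
  have eq: "\<And>x. x \<in> {0<..} \<Longrightarrow> sqrt z * (\<bar>z\<bar> * kern 1 (z * x)) = kern z x"
    by (rule kern_scale[OF zp, symmetric]) simp
  have i1: "(\<lambda>x. \<bar>z\<bar> * kern 1 (z * x)) integrable_on {0<..}"
    using cv unfolding absolutely_integrable_on_def by (elim conjE)
  have hi: "((\<lambda>x. \<bar>z\<bar> * kern 1 (z * x)) has_integral C0) {0<..}"
    using integrable_integral[OF i1] cv by (elim conjE) simp
  have "(kern z has_integral (sqrt z * C0)) {0<..}"
    by (rule has_integral_eq[OF eq has_integral_mult_right[OF hi]])
  thus ?thesis by (simp add: has_integral_integrable_integral)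
qed

lemma kern1_int: "kern 1 integrable_on {0<..}"
  using kern1_absint set_lebesgue_integral_eq_integral(1) by blast

lemma C0_pos: "C0 > 0"
proof -
  define c where "c = (1 - exp (-1)) * (2::real) powr (-3/2)"
  have cpos: "c > 0" unfolding c_def by simp
  have i12: "kern 1 integrable_on {1..2}"
    unfolding kern_def by (intro integrable_continuous_interval continuous_intros) auto
  have "integral {1..2::real} (\<lambda>_. c) \<le> integral {1..2} (kern 1)"
  proof (rule integral_le)
    fix t :: real assume t: "t \<in> {1..2}"
    have "1 - exp (-1) \<le> 1 - exp (-t)" using t by simp
    moreover have "(2::real) powr (-3/2) \<le> t powr (-3/2)" using t by (intro powr_mono2') auto
    ultimately show "c \<le> kern 1 t" unfolding c_def kern_def
      by (intro mult_mono) auto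
  qed (use i12 in auto)
  also have "\<dots> \<le> integral {0<..} (kern 1)"
  proof (rule integral_subset_le)
    show "\<forall>x\<in>{0<..}. 0 \<le> kern 1 x" by (auto simp: kern_def)
  qed (use i12 kern1_int in auto)
  finally show ?thesis using cpos by (simp add: C0_def)
qed


definition Lap :: "(real \<Rightarrow> real) \<Rightarrow> real \<Rightarrow> real" where
  "Lap M t = (\<Sum>x\<in>supp_meas M. M x * exp (-(t * (tanh x)\<^sup>2)))"

lemma prod_exp_sum:
  fixes n :: nat and M :: "nat \<Rightarrow> real \<Rightarrow> real"
  assumes fin: "\<And>i. i < n \<Longrightarrow> finite (supp_meas (M i))"
  shows "(\<Sum>f\<in>PiE {..<n} (\<lambda>i. supp_meas (M i)).
            (\<Prod>i<n. M i (f i)) * exp (-((\<Sum>i<n. (tanh (f i))\<^sup>2) * t)))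
         = (\<Prod>i<n. Lap (M i) t)"
proof -
  have "(\<Prod>i<n. Lap (M i) t) = (\<Sum>f\<in>PiE {..<n} (\<lambda>i. supp_meas (M i)).
          \<Prod>i<n. M i (f i) * exp (-(t * (tanh (f i))\<^sup>2)))"
    unfolding Lap_def using fin by (intro prod_sum_PiE) auto
  also have "\<dots> = (\<Sum>f\<in>PiE {..<n} (\<lambda>i. supp_meas (M i)).
            (\<Prod>i<n. M i (f i)) * exp (-((\<Sum>i<n. (tanh (f i))\<^sup>2) * t)))"
  proof (rule sum.cong[OF refl])
    fix f
    have "exp (-((\<Sum>i<n. (tanh (f i))\<^sup>2) * t)) = exp (\<Sum>i<n. -(t * (tanh (f i))\<^sup>2))"
    proof -
      have "(\<Sum>i<n. (tanh (f i))\<^sup>2) * t = (\<Sum>i<n. t * (tanh (f i))\<^sup>2)"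
        by (metis mult.commute sum_distrib_left)
      thus ?thesis by (simp add: sum_negf)
    qed
    also have "\<dots> = (\<Prod>i<n. exp (-(t * (tanh (f i))\<^sup>2)))" by (simp add: exp_sum)
    finally show "(\<Prod>i<n. M i (f i) * exp (-(t * (tanh (f i))\<^sup>2))) =
        (\<Prod>i<n. M i (f i)) * exp (-((\<Sum>i<n. (tanh (f i))\<^sup>2) * t))"
      by (simp add: prod.distrib)
  qed
  finally show ?thesis by simp
qed

lemma comb:
  fixes n :: nat and M :: "nat \<Rightarrow> real \<Rightarrow> real"
  assumes fin: "\<And>i. i < n \<Longrightarrow> finite (supp_meas (M i))"
    and prob: "\<And>i. i < n \<Longrightarrow> Lap (M i) 0 = 1"
  shows "((\<lambda>t. (1 - (\<Prod>i<n. Lap (M i) t)) * t powr (-3/2)) has_integral (E_sqrt_V n M * C0)) {0<..}"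
proof -
  define P where "P = PiE {..<n} (\<lambda>i. supp_meas (M i))"
  define p where "p (f::nat \<Rightarrow> real) = (\<Prod>i<n. M i (f i))" for f
  define S where "S (f::nat \<Rightarrow> real) = (\<Sum>i<n. (tanh (f i))\<^sup>2)" for f
  have finP: "finite P" unfolding P_def using fin by (intro finite_PiE) auto
  have E: "E_sqrt_V n M * C0 = (\<Sum>f\<in>P. p f * (sqrt (S f) * C0))"
    unfolding E_sqrt_V_def P_def p_def S_def by (simp add: sum_distrib_right mult.assoc)
  have "((\<lambda>t. \<Sum>f\<in>P. p f * kern (S f) t) has_integral (\<Sum>f\<in>P. p f * (sqrt (S f) * C0))) {0<..}"
  proof (rule has_integral_sum[OF finP])
    fix f assume "f \<in> P"
    have "S f \<ge> 0" unfolding S_def by (intro sum_nonneg) auto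
    from kern_integral[OF this] have "(kern (S f) has_integral (sqrt (S f) * C0)) {0<..}"
      using integrable_integral by fastforce
    thus "((\<lambda>t. p f * kern (S f) t) has_integral (p f * (sqrt (S f) * C0))) {0<..}"
      by (rule has_integral_mult_right)
  qed
  moreover have "(\<Sum>f\<in>P. p f * kern (S f) t) = (1 - (\<Prod>i<n. Lap (M i) t)) * t powr (-3/2)" for t
  proof -
    have q: "(\<Sum>f\<in>P. p f * exp (-(S f * u))) = (\<Prod>i<n. Lap (M i) u)" for u
      unfolding P_def p_def S_def by (rule prod_exp_sum[OF fin])
    have q0: "(\<Sum>f\<in>P. p f) = 1"
      using q[of 0] prob by simp
    have "(\<Sum>f\<in>P. p f * kern (S f) t) = (\<Sum>f\<in>P. (p f - p f * exp (-(S f * t))) * t powr (-3/2))"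
      unfolding kern_def by (intro sum.cong) (simp_all add: algebra_simps)
    also have "\<dots> = (\<Sum>f\<in>P. p f - p f * exp (-(S f * t))) * t powr (-3/2)"
      by (simp add: sum_distrib_right)
    also have "\<dots> = ((\<Sum>f\<in>P. p f) - (\<Sum>f\<in>P. p f * exp (-(S f * t)))) * t powr (-3/2)"
      by (simp add: sum_subtractf)
    finally have "(\<Sum>f\<in>P. p f * kern (S f) t) = ((\<Sum>f\<in>P. p f) - (\<Sum>f\<in>P. p f * exp (-(S f * t)))) * t powr (-3/2)" .
    thus ?thesis using q q0 by simp
  qed
  ultimately show ?thesis using E by simp
qed



lemma amgm:
  fixes x :: "nat \<Rightarrow> real"
  assumes n: "n > 0" and x: "\<And>i. i < n \<Longrightarrow> x i \<ge> 0"
  shows "(\<Prod>i<n. x i) \<le> ((\<Sum>i<n. x i) / n) ^ n"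
proof -
  define P where "P = (\<Prod>i<n. x i)"
  have P0: "P \<ge> 0" unfolding P_def using x by (intro prod_nonneg) auto
  have A0: "(\<Sum>i<n. x i) / n \<ge> 0" using x by (intro divide_nonneg_nonneg sum_nonneg) auto
  have am0: "(\<Sum>i\<in>{..<n}. x i / card {..<n}) \<ge> P powr (1 / card {..<n})"
    unfolding P_def by (rule arith_geom_mean) (use n x in auto)
  have am: "(\<Sum>i<n. x i / real n) \<ge> P powr (1 / real n)"
    using am0 by simp
  hence am': "P powr (1 / real n) \<le> (\<Sum>i<n. x i) / n" by (simp add: sum_divide_distrib)
  show ?thesis
  proof (cases "P = 0")
    case True thus ?thesis using A0 by (simp add: P_def[symmetric])
  next
    case False
    hence Pp: "P > 0" using P0 by simp
    have "P = P powr ((1 / real n) * real n)" using n Pp by simp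
    also have "\<dots> = (P powr (1 / real n)) powr (real n)" by (simp add: powr_powr)
    also have "\<dots> = (P powr (1 / real n)) ^ n" using Pp by (simp add: powr_realpow)
    also have "\<dots> \<le> ((\<Sum>i<n. x i) / n) ^ n" using am' by (intro power_mono) auto
    finally show ?thesis by (simp add: P_def)
  qed
qed

lemma supp_Mmeas: "supp_meas (Mmeas w) = supp_meas w"
  unfolding supp_meas_def Mmeas_def by simp

theorem lemma5:
  fixes n :: nat and eta :: "nat \<Rightarrow> real \<Rightarrow> real"
  assumes "\<And>i. i < n \<Longrightarrow> admissible (eta i)"
  shows "E_sqrt_V n (\<lambda>_. Mbar n eta) \<le> E_sqrt_V n (\<lambda>i. Mmeas (eta i))"
proof -
  define Mb where "Mb = Mbar n eta"
  define U where "U = (\<Union>i<n. supp_meas (eta i))"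
  have adm: "\<And>i. i < n \<Longrightarrow> finite (supp_meas (eta i)) \<and> (\<forall>x. 0 \<le> eta i x)
     \<and> (\<Sum>x\<in>supp_meas (eta i). exp x * eta i x) = 1
     \<and> (\<Sum>x\<in>supp_meas (eta i). exp (- x) * eta i x) = 1"
    using assms unfolding admissible_def fin_pos_measure_def by blast
  have finM: "\<And>i. i < n \<Longrightarrow> finite (supp_meas (Mmeas (eta i)))"
    using adm by (simp add: supp_Mmeas)
  have probM: "Lap (Mmeas (eta i)) 0 = 1" if i: "i < n" for i
  proof -
    have "Lap (Mmeas (eta i)) 0 = (\<Sum>x\<in>supp_meas (eta i). (exp x * eta i x + exp (- x) * eta i x) / 2)"
      unfolding Lap_def supp_Mmeas Mmeas_def cosh_field_def by (intro sum.cong) (auto simp: field_simps)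
    also have "\<dots> = ((\<Sum>x\<in>supp_meas (eta i). exp x * eta i x) + (\<Sum>x\<in>supp_meas (eta i). exp (- x) * eta i x)) / 2"
      by (simp only: sum_divide_distrib[symmetric] sum.distrib)
    also have "\<dots> = 1" using adm[OF i] by simp
    finally show ?thesis .
  qed
  have finU: "finite U" unfolding U_def using adm by auto
  have Mb0: "Mb x = 0" if "x \<notin> U" for x
  proof -
    have "\<And>i. i < n \<Longrightarrow> eta i x = 0" using that unfolding U_def supp_meas_def by auto
    thus ?thesis unfolding Mb_def Mbar_def Mmeas_def by simp
  qed
  have suppMb: "supp_meas Mb \<subseteq> U" using Mb0 unfolding supp_meas_def by auto
  have finMb: "finite (supp_meas Mb)" using finU suppMb by (rule finite_subset[rotated])
  have LapMb: "Lap Mb t = (\<Sum>i<n. Lap (Mmeas (eta i)) t) / n" for t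
  proof -
    let ?e = "\<lambda>x. exp (-(t * (tanh x)\<^sup>2))"
    have "Lap Mb t = (\<Sum>x\<in>U. Mb x * ?e x)"
      unfolding Lap_def
      by (rule sum.mono_neutral_left[OF finU suppMb]) (auto simp: supp_meas_def)
    also have "\<dots> = (\<Sum>x\<in>U. (\<Sum>i<n. Mmeas (eta i) x * ?e x) / n)"
      unfolding Mb_def Mbar_def by (intro sum.cong) (auto simp: sum_distrib_right)
    also have "\<dots> = (\<Sum>i<n. \<Sum>x\<in>U. Mmeas (eta i) x * ?e x) / n"
      by (simp add: sum_divide_distrib[symmetric] sum.swap[of _ U])
    also have "\<dots> = (\<Sum>i<n. Lap (Mmeas (eta i)) t) / n"
    proof -
      have "(\<Sum>x\<in>U. Mmeas (eta i) x * ?e x) = Lap (Mmeas (eta i)) t" if i: "i < n" for i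
        unfolding Lap_def
      proof (rule sum.mono_neutral_right[OF finU])
        show "supp_meas (Mmeas (eta i)) \<subseteq> U" using i unfolding supp_Mmeas U_def by auto
      qed (auto simp: supp_meas_def)
      hence "(\<Sum>i<n. \<Sum>x\<in>U. Mmeas (eta i) x * ?e x) = (\<Sum>i<n. Lap (Mmeas (eta i)) t)"
        by (intro sum.cong) auto
      thus ?thesis by simp
    qed
    finally show ?thesis .
  qed
  have probMb: "Lap Mb 0 = 1" if "n > 0"
    using that probM by (simp add: LapMb)
  have h1: "((\<lambda>t. (1 - (\<Prod>i<n. Lap Mb t)) * t powr (-3/2)) has_integral
            (E_sqrt_V n (\<lambda>_. Mb) * C0)) {0<..}"
    by (rule comb[where M="\<lambda>_. Mb"]) (use finMb probMb in auto)
  have h2: "((\<lambda>t. (1 - (\<Prod>i<n. Lap (Mmeas (eta i)) t)) * t powr (-3/2)) has_integral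
            (E_sqrt_V n (\<lambda>i. Mmeas (eta i)) * C0)) {0<..}"
    by (rule comb) (use finM probM in auto)
  have "E_sqrt_V n (\<lambda>_. Mb) * C0 \<le> E_sqrt_V n (\<lambda>i. Mmeas (eta i)) * C0"
  proof (rule has_integral_le[OF h1 h2])
    fix t :: real assume t: "t \<in> {0<..}"
    have Lnn: "Lap (Mmeas (eta i)) t \<ge> 0" if "i < n" for i
      unfolding Lap_def Mmeas_def using adm[OF that]
      by (intro sum_nonneg mult_nonneg_nonneg) auto
    have "(\<Prod>i<n. Lap (Mmeas (eta i)) t) \<le> (\<Prod>i<n. Lap Mb t)"
    proof (cases "n = 0")
      case True thus ?thesis by simp
    next
      case False
      thus ?thesis using amgm[of n "\<lambda>i. Lap (Mmeas (eta i)) t"] Lnn by (simp add: LapMb)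
    qed
    thus "(1 - (\<Prod>i<n. Lap Mb t)) * t powr (-3/2) \<le> (1 - (\<Prod>i<n. Lap (Mmeas (eta i)) t)) * t powr (-3/2)"
      by (intro mult_right_mono) auto
  qed
  thus ?thesis using C0_pos unfolding Mb_def by simp
qed

end
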